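(* A reaction network $\mathcal R$ is essential if and only if for all $x,x'\in\mathbb{N}_0^n$: if $x$ leads to $x'$ via $\mathcal R$, then $x'$ leads to $x$ via $\mathcal R$.
   Context: A reaction network (RN) is a (possibly infinite) subset $\mathcal R\subseteq\mathbb{N}_0^n\times\mathbb{N}_0^n$ containing no element $(y,y')$ with $y=y'$; elements $(y,y')$ are reactions $y\to y'$. For $r_1=(y_1,y_1'),\ r_2=(y_2,y_2')$ define $r_1\oplus r_2=(y_1+0\vee(y_2-y_1'),\ y_2'+0\vee(y_1'-y_2))$ ($\vee$ componentwise maximum); it is associative. For $A\subseteq\mathbb{N}_0^n\times\mathbb{N}_0^n$, $\mathrm{cl}(A)$ is the set of all finite $\oplus$-sums of elements of $A$, including the empty sum $(0,0)$. For $r=(y,y')$, $r^{-1}=(y',y)$. A set $A$ is reversible if $r\in A$ implies $r^{-1}\in A$, and $A$ is essential if $\mathrm{cl}(A)$ is reversible. An ordered sequence of reactions $y_1\to y_1',\dots,y_m\to y_m'$ is active on $x\in\mathbb{N}_0^n$ if $x+\sum_{i=1}^{k-1}(y_i'-y_i)\ge y_k$ (componentwise) for all $k$. A state $x$ leads to $x'$ via $\mathcal R$ if there is an ordered sequence of $m\ge0$ reactions of $\mathcal R$ (repetitions allowed) active on $x$ with $x'=x+\sum_{i=1}^m(y_i'-y_i)$. *)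

theory Defs
  imports "HOL-Analysis.Analysis"
begin

text \<open>States are elements of N_0^n, rendered as nat ^ 'n (n = CARD('n)).
  A reaction is a pair (y, y').\<close>

type_synonym 'n reaction = "(nat ^ 'n) \<times> (nat ^ 'n)"

definition reaction_network :: "('n::finite) reaction set \<Rightarrow> bool" where
  "reaction_network R \<longleftrightarrow> (\<forall>r\<in>R. fst r \<noteq> snd r)"

text \<open>r1 (+) r2 = (y1 + 0 v (y2 - y1'), y2' + 0 v (y1' - y2)); on nat, 0 v (a - b) is truncated subtraction.\<close>
definition rsum :: "('n::finite) reaction \<Rightarrow> 'n reaction \<Rightarrow> 'n reaction" where
  "rsum r1 r2 = (case r1 of (y1, y1') \<Rightarrow> case r2 of (y2, y2') \<Rightarrow>
     ((\<chi> i. y1 $ i + nat (max 0 (int (y2 $ i) - int (y1' $ i)))),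
      (\<chi> i. y2' $ i + nat (max 0 (int (y1' $ i) - int (y2 $ i))))))"

text \<open>cl(A): all finite (+)-sums of elements of A (left-fold of a list; the operation is associative),
  including the empty sum (0,0).\<close>
definition cl :: "('n::finite) reaction set \<Rightarrow> 'n reaction set" where
  "cl A = {foldl rsum (0, 0) rs | rs. set rs \<subseteq> A}"

definition rinv :: "('n::finite) reaction \<Rightarrow> 'n reaction" where
  "rinv r = (snd r, fst r)"

definition reversible :: "('n::finite) reaction set \<Rightarrow> bool" where
  "reversible A \<longleftrightarrow> (\<forall>r\<in>A. rinv r \<in> A)"

definition essential :: "('n::finite) reaction set \<Rightarrow> bool" where
  "essential A \<longleftrightarrow> reversible (cl A)"

definition net_change :: "('n::finite) reaction list \<Rightarrow> int ^ 'n" where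
  "net_change rs = (\<chi> i. (\<Sum>r\<leftarrow>rs. int (snd r $ i) - int (fst r $ i)))"

definition active_on :: "('n::finite) reaction list \<Rightarrow> nat ^ 'n \<Rightarrow> bool" where
  "active_on rs x \<longleftrightarrow> (\<forall>k < length rs. \<forall>i.
      int (x $ i) + net_change (take k rs) $ i \<ge> int (fst (rs ! k) $ i))"

definition leads_to :: "('n::finite) reaction set \<Rightarrow> nat ^ 'n \<Rightarrow> nat ^ 'n \<Rightarrow> bool" where
  "leads_to R x x' \<longleftrightarrow> (\<exists>rs. set rs \<subseteq> R \<and> active_on rs x \<and>
      (\<forall>i. int (x' $ i) = int (x $ i) + net_change rs $ i))"

end

theory Submission
  imports Defs
begin

definition FF :: "('n::finite) reaction list \<Rightarrow> 'n reaction" where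
  "FF rs = foldl rsum (0, 0) rs"

lemma rsum_fst: "fst (rsum r1 r2) $ i = fst r1 $ i + (fst r2 $ i - snd r1 $ i)"
  by (cases r1; cases r2) (simp add: rsum_def max_def nat_diff_distrib')

lemma rsum_snd: "snd (rsum r1 r2) $ i = snd r2 $ i + (snd r1 $ i - fst r2 $ i)"
  by (cases r1; cases r2) (simp add: rsum_def max_def nat_diff_distrib'; linarith)

lemma prod_vec_eq: "(a::('n::finite) reaction) = b \<longleftrightarrow> (\<forall>i. fst a $ i = fst b $ i \<and> snd a $ i = snd b $ i)"
  by (cases a; cases b) (auto simp: vec_eq_iff)

lemma rsum_assoc: "rsum (rsum a b) c = rsum a (rsum b c)"
  unfolding prod_vec_eq rsum_fst rsum_snd by auto

lemma rsum_0l: "rsum (0,0) r = r"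
  unfolding prod_vec_eq rsum_fst rsum_snd by auto

lemma rsum_0r: "rsum r (0,0) = r"
  unfolding prod_vec_eq rsum_fst rsum_snd by auto

lemma foldl_rsum: "foldl rsum a rs = rsum a (FF rs)"
proof (induction rs arbitrary: a)
  case Nil then show ?case by (simp add: FF_def rsum_0r)
next
  case (Cons r rs)
  have "FF (r # rs) = foldl rsum (rsum (0,0) r) rs" by (simp add: FF_def)
  also have "\<dots> = rsum r (FF rs)" by (simp only: Cons.IH rsum_0l)
  finally have e: "FF (r # rs) = rsum r (FF rs)" .
  have "foldl rsum a (r # rs) = rsum (rsum a r) (FF rs)" by (simp only: foldl.simps Cons.IH)
  then show ?case by (simp only: e rsum_assoc)
qed

lemma FF_append: "FF (a @ b) = rsum (FF a) (FF b)"
proof -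
  have "FF (a @ b) = foldl rsum (FF a) b" unfolding FF_def by (simp only: foldl_append)
  then show ?thesis by (simp only: foldl_rsum)
qed

lemma FF_single: "FF [r] = r"
  unfolding FF_def by (simp only: foldl.simps rsum_0l)

lemma FF_snoc: "FF (rs @ [r]) = rsum (FF rs) r"
  by (simp only: FF_append FF_single)

lemma net_snoc: "net_change (rs @ [r]) $ i = net_change rs $ i + int (snd r $ i) - int (fst r $ i)"
  by (simp add: net_change_def)

lemma net_append: "net_change (rs @ ss) $ i = net_change rs $ i + net_change ss $ i"
  by (simp add: net_change_def)

lemma active_snoc: "active_on (rs @ [r]) x \<longleftrightarrow>
   active_on rs x \<and> (\<forall>i. int (x $ i) + net_change rs $ i \<ge> int (fst r $ i))"
  unfolding active_on_def
  by (auto simp: less_Suc_eq nth_append)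

lemma AB: "(\<forall>i. int (snd (FF rs) $ i) - int (fst (FF rs) $ i) = net_change rs $ i) \<and>
   (\<forall>x. active_on rs x \<longleftrightarrow> (\<forall>i. fst (FF rs) $ i \<le> x $ i))"
proof (induction rs rule: rev_induct)
  case Nil then show ?case by (simp add: FF_def net_change_def active_on_def)
next
  case (snoc r rs)
  have 1: "\<forall>i. int (snd (FF (rs@[r])) $ i) - int (fst (FF (rs@[r])) $ i) = net_change (rs@[r]) $ i"
  proof
    fix i
    have h: "int (snd (FF rs) $ i) - int (fst (FF rs) $ i) = net_change rs $ i" using snoc by blast
    show "int (snd (FF (rs@[r])) $ i) - int (fst (FF (rs@[r])) $ i) = net_change (rs@[r]) $ i"
      unfolding FF_snoc rsum_fst rsum_snd net_snoc using h by arith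
  qed
  have 2: "active_on (rs@[r]) x \<longleftrightarrow> (\<forall>i. fst (FF (rs@[r])) $ i \<le> x $ i)" for x
  proof -
    have "active_on (rs@[r]) x \<longleftrightarrow> (\<forall>i. fst (FF rs) $ i \<le> x $ i \<and> int (x $ i) + net_change rs $ i \<ge> int (fst r $ i))"
      unfolding active_snoc using snoc[THEN conjunct2, rule_format, of x] by (simp only: all_conj_distrib)
    also have "\<dots> \<longleftrightarrow> (\<forall>i. fst (FF (rs@[r])) $ i \<le> x $ i)"
    proof -
      have "fst (FF rs) $ i \<le> x $ i \<and> int (x $ i) + net_change rs $ i \<ge> int (fst r $ i) \<longleftrightarrow> fst (FF (rs@[r])) $ i \<le> x $ i" for i
      proof -
        have h: "int (snd (FF rs) $ i) - int (fst (FF rs) $ i) = net_change rs $ i" using snoc by blast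
        show ?thesis unfolding FF_snoc rsum_fst using h by arith
      qed
      then show ?thesis by auto
    qed
    finally show ?thesis .
  qed
  show ?case using 1 2 by blast
qed

lemma cl_FF: "r \<in> cl A \<longleftrightarrow> (\<exists>rs. set rs \<subseteq> A \<and> r = FF rs)"
  by (auto simp: cl_def FF_def)

theorem proposition3p6:
  fixes R :: "('n::finite) reaction set"
  assumes "reaction_network R"
  shows "essential R \<longleftrightarrow> (\<forall>x x'. leads_to R x x' \<longrightarrow> leads_to R x' x)"
proof
  assume E: "essential R"
  show "\<forall>x x'. leads_to R x x' \<longrightarrow> leads_to R x' x"
  proof (intro allI impI)
    fix x x' assume "leads_to R x x'"
    then obtain rs where rs: "set rs \<subseteq> R" "active_on rs x" "\<forall>i. int (x' $ i) = int (x $ i) + net_change rs $ i"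
      unfolding leads_to_def by blast
    have "FF rs \<in> cl R" using rs cl_FF by blast
    then have "rinv (FF rs) \<in> cl R" using E by (auto simp: essential_def reversible_def)
    then obtain ss where ss: "set ss \<subseteq> R" "rinv (FF rs) = FF ss" using cl_FF by blast
    have A1: "\<forall>i. int (snd (FF rs) $ i) - int (fst (FF rs) $ i) = net_change rs $ i"
      and A2: "\<forall>i. fst (FF rs) $ i \<le> x $ i" using AB[of rs] rs(2) by auto
    have B1: "\<forall>i. int (snd (FF ss) $ i) - int (fst (FF ss) $ i) = net_change ss $ i"
      using AB[of ss] by auto
    have f: "fst (FF ss) = snd (FF rs)" "snd (FF ss) = fst (FF rs)"
      using ss(2) by (metis rinv_def fst_conv snd_conv)+
    have le: "fst (FF ss) $ i \<le> x' $ i" for i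
    proof -
      have "int (snd (FF rs) $ i) - int (fst (FF rs) $ i) = net_change rs $ i" using A1 by blast
      moreover have "fst (FF rs) $ i \<le> x $ i" using A2 by blast
      moreover have "int (x' $ i) = int (x $ i) + net_change rs $ i" using rs(3) by blast
      ultimately show ?thesis unfolding f by linarith
    qed
    have act: "active_on ss x'"
      using AB[of ss] le by blast
    have fin: "int (x $ i) = int (x' $ i) + net_change ss $ i" for i
    proof -
      have "int (snd (FF rs) $ i) - int (fst (FF rs) $ i) = net_change rs $ i" using A1 by blast
      moreover have "int (snd (FF ss) $ i) - int (fst (FF ss) $ i) = net_change ss $ i" using B1 by blast
      moreover have "int (x' $ i) = int (x $ i) + net_change rs $ i" using rs(3) by blast
      ultimately show ?thesis unfolding f by linarith
    qed
    show "leads_to R x' x"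
      unfolding leads_to_def
      using ss(1) act fin by blast
  qed
next
  assume H: "\<forall>x x'. leads_to R x x' \<longrightarrow> leads_to R x' x"
  show "essential R"
    unfolding essential_def reversible_def
  proof
    fix r assume "r \<in> cl R"
    then obtain rs where rs: "set rs \<subseteq> R" "r = FF rs" using cl_FF by blast
    obtain y y' where yy: "FF rs = (y, y')" by fastforce
    have A1: "\<forall>i. int (y' $ i) - int (y $ i) = net_change rs $ i"
      using AB[of rs] yy by auto
    have "active_on rs y" using AB[of rs] yy by auto
    moreover have "\<forall>i. int (y' $ i) = int (y $ i) + net_change rs $ i"
    proof
      fix i show "int (y' $ i) = int (y $ i) + net_change rs $ i" using A1[rule_format, of i] by linarith
    qed
    ultimately have "leads_to R y y'" unfolding leads_to_def using rs(1) by blast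
    then have "leads_to R y' y" using H by blast
    then obtain ss where ss: "set ss \<subseteq> R" "active_on ss y'" "\<forall>i. int (y $ i) = int (y' $ i) + net_change ss $ i"
      unfolding leads_to_def by blast
    obtain z z' where zz: "FF ss = (z, z')" by fastforce
    have B1: "\<forall>i. int (z' $ i) - int (z $ i) = net_change ss $ i"
      and B2: "\<forall>i. z $ i \<le> y' $ i" using AB[of ss] zz ss(2) by auto
    have "FF (ss @ rs @ ss) = (y', y)"
      unfolding FF_append yy zz prod_vec_eq rsum_fst rsum_snd
      apply (intro allI)
      subgoal for i
        using B1[rule_format, of i] B2[rule_format, of i] ss(3)[rule_format, of i]
      proof -
        assume h1: "int (z' $ i) - int (z $ i) = net_change ss $ i" and h2: "z $ i \<le> y' $ i"
          and h3: "int (y $ i) = int (y' $ i) + net_change ss $ i"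
        have e1: "y $ i - z' $ i = y' $ i - z $ i" using h1 h2 h3 by linarith
        have e2: "z' $ i - y $ i = 0" using h1 h2 h3 by linarith
        have e3: "z' $ i + y' $ i - z $ i = y $ i" using h1 h2 h3 by linarith
        show ?thesis using e1 e2 e3 h2 by simp
      qed
      done
    moreover have "set (ss @ rs @ ss) \<subseteq> R" using rs ss by auto
    ultimately have "(y', y) \<in> cl R" unfolding cl_FF by metis
    moreover have "rinv r = (y', y)" using rs(2) yy by (simp add: rinv_def)
    ultimately show "rinv r \<in> cl R" by simp
  qed
qed

end
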